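(* In the local model, let $p$ be the node ($x=y=0$) of a fibre over a point $b_0$ with $t(b_0)=0$. The morphism $$\sigma=((-1)^m\sigma^x_m,\dots,-\sigma^x_1,(-1)^m\sigma^y_m,\dots,-\sigma^y_1,\pi^{(m)}):U^{(m)}_B\to\mathbb A^{2m}\times B$$ is a closed embedding in a neighbourhood of the cycle $mp$. (Equivalently: every $\mathfrak S_m$-invariant polynomial in $x_1,\dots,x_m,y_1,\dots,y_m$ is, modulo the relations $x_iy_i=t$, a polynomial in the $\sigma^x_i,\sigma^y_j$ and $t$.)
   Context: Local model: $B$ is an irreducible base with a regular function $t$, and $U\subset\mathbb A^2_{x,y}\times B$ is the family of curves $\{xy=t\}$ over $B$. Thus $U^m_B\subset\mathbb A^{2m}\times B$ is given by $x_1y_1=\dots=x_my_m=t$, $U^{(m)}_B=U^m_B/\mathfrak S_m$ is the relative symmetric product with structure map $\pi^{(m)}:U^{(m)}_B\to B$. $\sigma^x_i$ and $\sigma^y_i$ ($0\le i\le m$, $\sigma_0=1$) denote the elementary symmetric functions of $x_1,\dots,x_m$ and of $y_1,\dots,y_m$, viewed as functions on $U^{(m)}_B$. *)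

theory Defs
  imports Main "HOL-Library.Poly_Mapping" "HOL-Combinatorics.Permutations"
begin

type_synonym ('v, 'a) mpoly = "('v \<Rightarrow>\<^sub>0 nat) \<Rightarrow>\<^sub>0 'a"

definition mpVar :: "'v \<Rightarrow> ('v, 'a::comm_ring_1) mpoly" where
  "mpVar v = Poly_Mapping.single (Poly_Mapping.single v 1) 1"

definition mpConst :: "'a::comm_ring_1 \<Rightarrow> ('v, 'a) mpoly" where
  "mpConst c = Poly_Mapping.single 0 c"

definition mpVars :: "('v, 'a::comm_ring_1) mpoly \<Rightarrow> 'v set" where
  "mpVars P = \<Union> (Poly_Mapping.keys ` Poly_Mapping.keys P)"

definition mpSubst :: "('w \<Rightarrow> ('v, 'a::comm_ring_1) mpoly) \<Rightarrow> ('w, 'a) mpoly \<Rightarrow> ('v, 'a) mpoly" where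
  "mpSubst f Q = (\<Sum>mon\<in>Poly_Mapping.keys Q.
      mpConst (Poly_Mapping.lookup Q mon) *
      (\<Prod>w\<in>Poly_Mapping.keys mon. f w ^ Poly_Mapping.lookup mon w))"

definition xv :: "nat \<Rightarrow> (nat \<times> bool, 'a::comm_ring_1) mpoly" where
  "xv i = mpVar (i, True)"
definition yv :: "nat \<Rightarrow> (nat \<times> bool, 'a::comm_ring_1) mpoly" where
  "yv i = mpVar (i, False)"

definition permute_mp :: "(nat \<Rightarrow> nat) \<Rightarrow> (nat \<times> bool, 'a::comm_ring_1) mpoly
    \<Rightarrow> (nat \<times> bool, 'a) mpoly" where
  "permute_mp \<pi> P = mpSubst (\<lambda>(i, b). mpVar (\<pi> i, b)) P"

text \<open>Elementary symmetric functions of x_1..x_m (b = True) or y_1..y_m (b = False),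
  indices 0..m-1.\<close>
definition esym :: "nat \<Rightarrow> bool \<Rightarrow> nat \<Rightarrow> (nat \<times> bool, 'a::comm_ring_1) mpoly" where
  "esym m b k = (\<Sum>S\<in>{S. S \<subseteq> {..<m} \<and> card S = k}. \<Prod>i\<in>S. mpVar (i, b))"

end

theory Submission
  imports Defs
begin

lemma mpConst_add: "mpConst (a+b) = (mpConst a + mpConst b :: ('v,'a::comm_ring_1) mpoly)"
  by (simp add: mpConst_def Poly_Mapping.single_add)
lemma mpConst_mult: "mpConst (a*b) = (mpConst a * mpConst b :: ('v,'a::comm_ring_1) mpoly)"
  by (simp add: mpConst_def Poly_Mapping.mult_single)
lemma mpConst_0[simp]: "mpConst 0 = (0 :: ('v,'a::comm_ring_1) mpoly)"
  by (simp add: mpConst_def)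
lemma mpConst_1[simp]: "mpConst 1 = (1 :: ('v,'a::comm_ring_1) mpoly)"
  by (simp add: mpConst_def)
lemma mpConst_uminus: "mpConst (-a) = (- mpConst a :: ('v,'a::comm_ring_1) mpoly)"
  by (simp add: mpConst_def Poly_Mapping.single_uminus)
lemma mpConst_diff: "mpConst (a-b) = (mpConst a - mpConst b :: ('v,'a::comm_ring_1) mpoly)"
  by (simp add: mpConst_def Poly_Mapping.single_diff)
lemma mpConst_power: "mpConst (a^n) = (mpConst a ^ n :: ('v,'a::comm_ring_1) mpoly)"
  by (induct n) (simp_all add: mpConst_mult)
lemma mpConst_of_nat: "mpConst (of_nat n) = (of_nat n :: ('v,'a::comm_ring_1) mpoly)"
  by (simp add: mpConst_def)

definition evm :: "('w \<Rightarrow> ('v, 'a::comm_ring_1) mpoly) \<Rightarrow> ('w \<Rightarrow>\<^sub>0 nat) \<Rightarrow> ('v, 'a) mpoly" where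
  "evm f mon = (\<Prod>w\<in>Poly_Mapping.keys mon. f w ^ Poly_Mapping.lookup mon w)"

lemma evm_sub: "finite K \<Longrightarrow> Poly_Mapping.keys mon \<subseteq> K \<Longrightarrow>
   evm f mon = (\<Prod>w\<in>K. f w ^ Poly_Mapping.lookup mon w)"
  unfolding evm_def
  by (rule prod.mono_neutral_left) (auto simp: in_keys_iff)

lemma evm_add: "evm f (a+b) = evm f a * evm f b"
proof -
  let ?K = "Poly_Mapping.keys a \<union> Poly_Mapping.keys b"
  have "evm f (a+b) = (\<Prod>w\<in>?K. f w ^ Poly_Mapping.lookup (a+b) w)"
    by (rule evm_sub) (use Poly_Mapping.keys_add[of a b] in auto)
  also have "\<dots> = (\<Prod>w\<in>?K. f w ^ Poly_Mapping.lookup a w * f w ^ Poly_Mapping.lookup b w)"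
    by (simp add: Poly_Mapping.lookup_add power_add)
  also have "\<dots> = evm f a * evm f b"
    by (simp add: prod.distrib evm_sub[of ?K])
  finally show ?thesis .
qed

lemma evm_0[simp]: "evm f 0 = 1" by (simp add: evm_def)

lemma mpSubst_sub: "finite K \<Longrightarrow> Poly_Mapping.keys Q \<subseteq> K \<Longrightarrow>
  mpSubst f Q = (\<Sum>mon\<in>K. mpConst (Poly_Mapping.lookup Q mon) * evm f mon)"
  unfolding mpSubst_def evm_def[symmetric]
  by (rule sum.mono_neutral_left) (auto simp: in_keys_iff)

lemma mpSubst_add: "mpSubst f (P+Q) = mpSubst f P + mpSubst f Q"
proof -
  let ?K = "Poly_Mapping.keys P \<union> Poly_Mapping.keys Q"
  have "mpSubst f (P+Q) = (\<Sum>mon\<in>?K. mpConst (Poly_Mapping.lookup (P+Q) mon) * evm f mon)"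
    by (rule mpSubst_sub) (use Poly_Mapping.keys_add[of P Q] in auto)
  also have "\<dots> = mpSubst f P + mpSubst f Q"
    by (simp add: Poly_Mapping.lookup_add mpConst_add distrib_right sum.distrib mpSubst_sub[of ?K])
  finally show ?thesis .
qed

lemma mpSubst_0[simp]: "mpSubst f 0 = 0" by (simp add: mpSubst_def)

lemma mpSubst_single: "mpSubst f (Poly_Mapping.single mon c) = mpConst c * evm f mon"
  by (subst mpSubst_sub[of "{mon}"]) auto

lemma mpSubst_sum: "mpSubst f (sum g I) = (\<Sum>i\<in>I. mpSubst f (g i))"
  by (induct I rule: infinite_finite_induct) (auto simp: mpSubst_add)

lemma mp_expand: "P = (\<Sum>k\<in>Poly_Mapping.keys P. Poly_Mapping.single k (Poly_Mapping.lookup P k))"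
proof (rule poly_mapping_eqI)
  fix k
  show "Poly_Mapping.lookup P k = Poly_Mapping.lookup (\<Sum>k\<in>Poly_Mapping.keys P. Poly_Mapping.single k (Poly_Mapping.lookup P k)) k"
    by (auto simp: Poly_Mapping.lookup_sum Poly_Mapping.lookup_single when_def in_keys_iff)
qed

lemma mpSubst_mult: "mpSubst f (P*Q) = mpSubst f P * mpSubst f Q"
proof -
  have "P*Q = (\<Sum>a\<in>Poly_Mapping.keys P. \<Sum>b\<in>Poly_Mapping.keys Q.
     Poly_Mapping.single (a+b) (Poly_Mapping.lookup P a * Poly_Mapping.lookup Q b))"
    by (subst mp_expand[of P], subst mp_expand[of Q])
       (simp add: sum_product Poly_Mapping.mult_single)
  hence "mpSubst f (P*Q) = (\<Sum>a\<in>Poly_Mapping.keys P. \<Sum>b\<in>Poly_Mapping.keys Q.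
     (mpConst (Poly_Mapping.lookup P a) * evm f a) * (mpConst (Poly_Mapping.lookup Q b) * evm f b))"
    by (simp add: mpSubst_sum mpSubst_single mpConst_mult evm_add mult_ac)
  also have "\<dots> = mpSubst f P * mpSubst f Q"
    by (simp add: mpSubst_def evm_def sum_product)
  finally show ?thesis .
qed

lemma mpSubst_uminus: "mpSubst f (-P) = - mpSubst f P"
  using mpSubst_add[of f P "-P"] by (metis add.right_inverse minus_unique mpSubst_0)
lemma mpSubst_diff: "mpSubst f (P-Q) = mpSubst f P - mpSubst f Q"
  using mpSubst_add[of f P "-Q"] by (simp add: mpSubst_uminus)
lemma mpSubst_const: "mpSubst f (mpConst c) = mpConst c"
  by (simp add: mpConst_def mpSubst_single)
lemma mpSubst_var: "mpSubst f (mpVar v) = f v"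
  by (simp add: mpVar_def mpSubst_single evm_def)

lemma mpVars_add: "mpVars (P+Q) \<subseteq> mpVars P \<union> mpVars Q"
  unfolding mpVars_def using Poly_Mapping.keys_add[of P Q] by blast
lemma mpVars_uminus: "mpVars (-P) = mpVars P"
  unfolding mpVars_def by (simp add: keys_minus)
lemma mpVars_diff: "mpVars (P-Q) \<subseteq> mpVars P \<union> mpVars Q"
  using mpVars_add[of P "-Q"] by (simp add: mpVars_uminus)
lemma mpVars_mult: "mpVars (P*Q) \<subseteq> mpVars P \<union> mpVars Q"
proof
  fix v assume "v \<in> mpVars (P*Q)"
  then obtain mon where mon: "mon \<in> Poly_Mapping.keys (P*Q)" "v \<in> Poly_Mapping.keys mon"
    by (auto simp: mpVars_def)
  then obtain a b where "a \<in> Poly_Mapping.keys P" "b \<in> Poly_Mapping.keys Q" "mon = a+b"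
    using Poly_Mapping.keys_mult[of P Q] by blast
  then show "v \<in> mpVars P \<union> mpVars Q"
    using mon Poly_Mapping.keys_add[of a b] by (auto simp: mpVars_def)
qed
lemma mpVars_const: "mpVars (mpConst c) = {}"
  by (simp add: mpVars_def mpConst_def)
lemma mpVars_var: "mpVars (mpVar v :: ('v,'a::comm_ring_1) mpoly) = {v}"
  by (simp add: mpVars_def mpVar_def)

definition rr :: "'a \<Rightarrow> nat \<Rightarrow> (nat \<times> bool, 'a::comm_ring_1) mpoly" where
  "rr t i = xv i * yv i - mpConst t"

definition inI :: "nat \<Rightarrow> 'a \<Rightarrow> (nat \<times> bool, 'a::comm_ring_1) mpoly \<Rightarrow> bool" where
  "inI m t f \<longleftrightarrow> (\<exists>h. f = (\<Sum>i<m. h i * rr t i))"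

definition Good :: "nat \<Rightarrow> 'a \<Rightarrow> (nat \<times> bool, 'a::comm_ring_1) mpoly \<Rightarrow> bool" where
  "Good m t f \<longleftrightarrow> (\<exists>Q. mpVars Q \<subseteq> {1..m} \<times> UNIV \<and> inI m t (f - mpSubst (\<lambda>(k, b). esym m b k) Q))"

lemma inI_0: "inI m t 0"
  unfolding inI_def by (rule exI[of _ "\<lambda>_. 0"]) simp

lemma inI_add: "inI m t f \<Longrightarrow> inI m t g \<Longrightarrow> inI m t (f+g)"
  unfolding inI_def
proof (elim exE)
  fix h1 h2 assume "f = (\<Sum>i<m. h1 i * rr t i)" "g = (\<Sum>i<m. h2 i * rr t i)"
  then show "\<exists>h. f + g = (\<Sum>i<m. h i * rr t i)"
    by (intro exI[of _ "\<lambda>i. h1 i + h2 i"]) (simp add: distrib_right sum.distrib)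
qed

lemma inI_mult: "inI m t f \<Longrightarrow> inI m t (g*f)"
  unfolding inI_def
proof (elim exE)
  fix h1 assume "f = (\<Sum>i<m. h1 i * rr t i)"
  then show "\<exists>h. g * f = (\<Sum>i<m. h i * rr t i)"
    by (intro exI[of _ "\<lambda>i. g * h1 i"]) (simp add: sum_distrib_left mult.assoc)
qed

lemma inI_uminus: "inI m t f \<Longrightarrow> inI m t (-f)"
  using inI_mult[of m t f "-1"] by simp

lemma inI_diff: "inI m t f \<Longrightarrow> inI m t g \<Longrightarrow> inI m t (f-g)"
  using inI_add[of m t f "-g"] inI_uminus[of m t g] by simp

lemma inI_rr: "j < m \<Longrightarrow> inI m t (g * rr t j)"
  unfolding inI_def
proof (rule exI[of _ "\<lambda>i. if i = j then g else 0"])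
  assume "j < m"
  have "(\<Sum>i<m. (if i = j then g else 0) * rr t i) = (\<Sum>i<m. if i = j then g * rr t i else 0)"
    by (rule sum.cong) auto
  also have "\<dots> = g * rr t j" using \<open>j < m\<close> by simp
  finally show "g * rr t j = (\<Sum>i<m. (if i = j then g else 0) * rr t i)" by simp
qed

lemma inI_sum: "(\<And>i. i \<in> I \<Longrightarrow> inI m t (f i)) \<Longrightarrow> inI m t (sum f I)"
  by (induct I rule: infinite_finite_induct) (auto simp: inI_0 inI_add)

lemma Good_of: "inI m t (f - g) \<Longrightarrow> Good m t g \<Longrightarrow> Good m t f"
  unfolding Good_def
proof (elim exE conjE)
  fix Q assume "inI m t (f - g)" "mpVars Q \<subseteq> {1..m} \<times> UNIV"
       "inI m t (g - mpSubst (\<lambda>(k, b). esym m b k) Q)"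
  then show "\<exists>Q. mpVars Q \<subseteq> {1..m} \<times> UNIV \<and> inI m t (f - mpSubst (\<lambda>(k, b). esym m b k) Q)"
    using inI_add[of m t "f - g" "g - mpSubst (\<lambda>(k, b). esym m b k) Q"]
    by (intro exI[of _ Q]) simp
qed

lemma Good_const: "Good m t (mpConst c)"
  unfolding Good_def
  by (rule exI[of _ "mpConst c"]) (simp add: mpVars_const mpSubst_const inI_0)

lemma Good_add: "Good m t f \<Longrightarrow> Good m t g \<Longrightarrow> Good m t (f+g)"
  unfolding Good_def
proof (elim exE conjE)
  fix Q1 Q2 assume a: "mpVars Q1 \<subseteq> {1..m} \<times> UNIV" "inI m t (f - mpSubst (\<lambda>(k, b). esym m b k) Q1)"
    "mpVars Q2 \<subseteq> {1..m} \<times> UNIV" "inI m t (g - mpSubst (\<lambda>(k, b). esym m b k) Q2)"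
  show "\<exists>Q. mpVars Q \<subseteq> {1..m} \<times> UNIV \<and> inI m t (f + g - mpSubst (\<lambda>(k, b). esym m b k) Q)"
  proof (intro exI conjI)
    show "mpVars (Q1+Q2) \<subseteq> {1..m} \<times> UNIV" using a mpVars_add[of Q1 Q2] by blast
    show "inI m t (f + g - mpSubst (\<lambda>(k, b). esym m b k) (Q1+Q2))"
      using inI_add[OF a(2) a(4)] by (simp add: mpSubst_add algebra_simps)
  qed
qed

lemma Good_mult: "Good m t f \<Longrightarrow> Good m t g \<Longrightarrow> Good m t (f*g)"
  unfolding Good_def
proof (elim exE conjE)
  fix Q1 Q2 assume a: "mpVars Q1 \<subseteq> {1..m} \<times> UNIV" "inI m t (f - mpSubst (\<lambda>(k, b). esym m b k) Q1)"
    "mpVars Q2 \<subseteq> {1..m} \<times> UNIV" "inI m t (g - mpSubst (\<lambda>(k, b). esym m b k) Q2)"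
  define S1 where "S1 = mpSubst (\<lambda>(k, b). esym m b k) Q1"
  define S2 where "S2 = mpSubst (\<lambda>(k, b). esym m b k) Q2"
  show "\<exists>Q. mpVars Q \<subseteq> {1..m} \<times> UNIV \<and> inI m t (f * g - mpSubst (\<lambda>(k, b). esym m b k) Q)"
  proof (intro exI conjI)
    show "mpVars (Q1*Q2) \<subseteq> {1..m} \<times> UNIV" using a mpVars_mult[of Q1 Q2] by blast
    have e: "f*g - S1*S2 = g * (f - S1) + S1 * (g - S2)" by (simp add: algebra_simps)
    have "inI m t (f*g - S1*S2)" unfolding e
      using a by (intro inI_add inI_mult) (auto simp: S1_def S2_def)
    then show "inI m t (f * g - mpSubst (\<lambda>(k, b). esym m b k) (Q1*Q2))"
      by (simp add: mpSubst_mult S1_def S2_def)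
  qed
qed

lemma Good_uminus: "Good m t f \<Longrightarrow> Good m t (-f)"
  using Good_mult[OF Good_const[of m t "-1"], of f] by (simp add: mpConst_uminus)

lemma Good_diff: "Good m t f \<Longrightarrow> Good m t g \<Longrightarrow> Good m t (f-g)"
  using Good_add[of m t f "-g"] Good_uminus[of m t g] by simp

lemma Good_sum: "(\<And>i. i \<in> I \<Longrightarrow> Good m t (f i)) \<Longrightarrow> Good m t (sum f I)"
  by (induct I rule: infinite_finite_induct) (auto simp: Good_add Good_const[of m t 0, simplified])

lemma Good_of_nat: "Good m t (of_nat n)"
  using Good_const[of m t "of_nat n"] by (simp add: mpConst_of_nat)

lemma esym_0: "esym m b 0 = 1"
proof -
  have "{S. S \<subseteq> {..<m} \<and> card S = 0} = {{}}"
    by (auto simp: card_eq_0_iff dest: rev_finite_subset[OF finite_lessThan])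
  then show ?thesis by (simp add: esym_def)
qed

lemma esym_gt: "k > m \<Longrightarrow> esym m b k = 0"
proof -
  assume "k > m"
  have "{S. S \<subseteq> {..<m} \<and> card S = k} = {}"
  proof (rule ccontr)
    assume "{S. S \<subseteq> {..<m} \<and> card S = k} \<noteq> {}"
    then obtain S where "S \<subseteq> {..<m}" "card S = k" by blast
    then have "k \<le> m" using card_mono[of "{..<m}" S] by simp
    then show False using \<open>k > m\<close> by simp
  qed
  then show ?thesis unfolding esym_def by (simp only: sum.empty)
qed

lemma Good_esym: "Good m t (esym m b k)"
proof (cases "k = 0 \<or> k > m")
  case True
  then show ?thesis using Good_const[of m t 1] Good_const[of m t 0]
    by (auto simp: esym_0 esym_gt)
next
  case False
  show ?thesis unfolding Good_def
    by (rule exI[of _ "mpVar (k,b)"]) (use False in \<open>auto simp: mpVars_var mpSubst_var inI_0\<close>)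
qed

definition Cs :: "nat \<Rightarrow> nat \<Rightarrow> nat set set" where
  "Cs m k = {S. S \<subseteq> {..<m} \<and> card S = k}"

lemma finite_Cs: "finite (Cs m k)"
  unfolding Cs_def by (rule finite_subset[of _ "Pow {..<m}"]) auto

lemma Cs_finite_el: "S \<in> Cs m k \<Longrightarrow> finite S"
  unfolding Cs_def by (auto dest: rev_finite_subset[OF finite_lessThan])

definition Tt :: "nat \<Rightarrow> bool \<Rightarrow> nat \<Rightarrow> nat \<Rightarrow> (nat \<times> bool, 'a::comm_ring_1) mpoly" where
  "Tt m b k a = (\<Sum>S\<in>Cs m k. \<Sum>i\<in>{..<m}-S. mpVar (i,b) ^ a * (\<Prod>j\<in>S. mpVar (j,b)))"

lemma esym_Cs: "esym m b k = (\<Sum>S\<in>Cs m k. \<Prod>j\<in>S. mpVar (j,b))"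
  by (simp add: esym_def Cs_def)

lemma Cs_0: "Cs m 0 = {{}}"
  unfolding Cs_def by (auto simp: card_eq_0_iff dest: rev_finite_subset[OF finite_lessThan])

lemma Tt_0: "Tt m b 0 a = (\<Sum>i<m. mpVar (i,b) ^ a)"
  by (simp add: Tt_def Cs_0)

lemma Tt_k0: "Tt m b k 0 = (of_nat (m - k) * esym m b k :: (nat \<times> bool, 'a::comm_ring_1) mpoly)"
proof -
  have cd: "card ({..<m}-S) = m - k" if S: "S \<in> Cs m k" for S
    using Cs_finite_el[OF S] S by (subst card_Diff_subset) (auto simp: Cs_def)
  have "Tt m b k 0 = (\<Sum>S\<in>Cs m k. of_nat (card ({..<m}-S)) * (\<Prod>j\<in>S. mpVar (j,b)))"
    unfolding Tt_def by simp
  also have "\<dots> = (\<Sum>S\<in>Cs m k. of_nat (m - k) * (\<Prod>j\<in>S. mpVar (j,b)))"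
    by (rule sum.cong[OF refl]) (simp add: cd)
  also have "\<dots> = of_nat (m - k) * esym m b k"
    by (simp add: esym_Cs sum_distrib_left)
  finally show ?thesis .
qed

lemma Tt_rec: "esym m b (Suc k) * Tt m b 0 a = (Tt m b (Suc k) a + Tt m b k (Suc a) :: (nat \<times> bool, 'a::comm_ring_1) mpoly)"
proof -
  define z :: "nat \<Rightarrow> (nat \<times> bool, 'a) mpoly" where "z i = mpVar (i,b)" for i
  define pS where "pS S = (\<Prod>j\<in>S. z j)" for S
  have "esym m b (Suc k) * Tt m b 0 a = (\<Sum>S\<in>Cs m (Suc k). \<Sum>i<m. z i ^ a * pS S)"
    unfolding esym_Cs Tt_0 sum_distrib_right sum_distrib_left by (subst sum.swap) (simp add: z_def pS_def mult_ac)
  also have "\<dots> = (\<Sum>S\<in>Cs m (Suc k). (\<Sum>i\<in>{..<m}-S. z i ^ a * pS S) + (\<Sum>i\<in>S. z i ^ a * pS S))"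
  proof (rule sum.cong)
    fix S assume "S \<in> Cs m (Suc k)"
    then have "S \<subseteq> {..<m}" by (simp add: Cs_def)
    then show "(\<Sum>i<m. z i ^ a * pS S) = (\<Sum>i\<in>{..<m}-S. z i ^ a * pS S) + (\<Sum>i\<in>S. z i ^ a * pS S)"
      by (rule sum.subset_diff[OF _ finite_lessThan])
  qed simp
  also have "\<dots> = Tt m b (Suc k) a + (\<Sum>S\<in>Cs m (Suc k). \<Sum>i\<in>S. z i ^ a * pS S)"
    by (simp add: sum.distrib Tt_def z_def pS_def)
  also have "(\<Sum>S\<in>Cs m (Suc k). \<Sum>i\<in>S. z i ^ a * pS S) = (\<Sum>(S,i)\<in>Sigma (Cs m (Suc k)) (\<lambda>S. S). z i ^ a * pS S)"
    by (rule sum.Sigma) (auto simp: finite_Cs Cs_finite_el)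
  also have "\<dots> = (\<Sum>(S,i)\<in>Sigma (Cs m k) (\<lambda>S. {..<m}-S). z i ^ Suc a * pS S)"
  proof (rule sum.reindex_bij_witness[of _ "\<lambda>(S,i). (insert i S, i)" "\<lambda>(S,i). (S - {i}, i)"])
    fix x assume "x \<in> Sigma (Cs m (Suc k)) (\<lambda>S. S)"
    then obtain S i where x: "x = (S,i)" "S \<in> Cs m (Suc k)" "i \<in> S" by auto
    have fS: "finite S" using Cs_finite_el[OF x(2)] .
    show "(case case x of (S, i) \<Rightarrow> (S - {i}, i) of (S, i) \<Rightarrow> (insert i S, i)) = x"
      using x by auto
    show "(case x of (S, i) \<Rightarrow> (S - {i}, i)) \<in> Sigma (Cs m k) (\<lambda>S. {..<m} - S)"
      using x fS by (auto simp: Cs_def)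
    show "(case case x of (S, i) \<Rightarrow> (S - {i}, i) of (S, i) \<Rightarrow> z i ^ Suc a * pS S) =
          (case x of (S, i) \<Rightarrow> z i ^ a * pS S)"
      using x fS by (simp add: pS_def prod.remove[of S i] mult_ac)
  next
    fix y assume "y \<in> Sigma (Cs m k) (\<lambda>S. {..<m} - S)"
    then obtain S i where y: "y = (S,i)" "S \<in> Cs m k" "i \<in> {..<m} - S" by auto
    have fS: "finite S" using Cs_finite_el[OF y(2)] .
    show "(case case y of (S, i) \<Rightarrow> (insert i S, i) of (S, i) \<Rightarrow> (S - {i}, i)) = y"
      using y by auto
    show "(case y of (S, i) \<Rightarrow> (insert i S, i)) \<in> Sigma (Cs m (Suc k)) (\<lambda>S. S)"
      using y fS by (auto simp: Cs_def)
  qed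
  also have "\<dots> = Tt m b k (Suc a)"
    unfolding Tt_def z_def pS_def
    by (rule sum.Sigma[symmetric]) (auto simp: finite_Cs)
  finally show ?thesis .
qed

lemma Good_Tt: "Good m t (Tt m b k a)"
proof (induct a arbitrary: k)
  case 0
  then show ?case using Good_mult[OF Good_of_nat Good_esym] by (simp add: Tt_k0)
next
  case (Suc a)
  have "Tt m b k (Suc a) = (esym m b (Suc k) * Tt m b 0 a - Tt m b (Suc k) a :: (nat \<times> bool, 'a) mpoly)"
    by (simp add: Tt_rec)
  moreover have "Good m t (esym m b (Suc k) * Tt m b 0 a - Tt m b (Suc k) a)"
    by (intro Good_diff Good_mult Good_esym Suc)
  ultimately show ?case by simp
qed

lemma Good_pows: "Good m t (\<Sum>i<m. mpVar (i,b) ^ a)"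
  using Good_Tt[of m t b 0 a] by (simp add: Tt_0)

definition mo :: "nat \<Rightarrow> nat \<times> nat \<Rightarrow> (nat \<times> bool, 'a::comm_ring_1) mpoly" where
  "mo i p = xv i ^ fst p * yv i ^ snd p"

definition ps :: "nat \<Rightarrow> nat \<times> nat \<Rightarrow> (nat \<times> bool, 'a::comm_ring_1) mpoly" where
  "ps m p = (\<Sum>i<m. mo i p)"

lemma inI_red:
  assumes "i < m"
  shows "inI m t (mo i (a,b) - mpConst (t ^ min a b) * mo i (a - min a b, b - min a b))"
proof -
  define c where "c = min a b"
  define X :: "(nat \<times> bool, 'a) mpoly" where "X = xv i * yv i"
  define T :: "(nat \<times> bool, 'a) mpoly" where "T = mpConst t"
  define A :: "(nat \<times> bool, 'a) mpoly" where "A = xv i ^ (a - c) * yv i ^ (b - c)"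
  define S :: "(nat \<times> bool, 'a) mpoly" where "S = (\<Sum>j<c. T ^ (c - Suc j) * X ^ j)"
  have e1: "mo i (a,b) = A * X ^ c"
    by (simp add: mo_def X_def A_def c_def power_mult_distrib mult_ac flip: power_add)
  have e2: "mo i (a - c, b - c) = A" by (simp add: mo_def A_def)
  have eqS: "X ^ c - T ^ c = (X - T) * S"
    unfolding S_def by (rule power_diff_sumr2)
  have "mo i (a,b) - mpConst (t ^ c) * mo i (a - c, b - c) = A * (X ^ c - T ^ c)"
    unfolding e1 e2 by (simp add: mpConst_power T_def algebra_simps)
  also have "\<dots> = (A * S) * rr t i"
    using eqS by (simp add: rr_def T_def X_def mult_ac)
  finally have "mo i (a,b) - mpConst (t ^ c) * mo i (a - c, b - c) = (A * S) * rr t i" .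
  then show ?thesis using inI_rr[OF assms] by (simp add: c_def)
qed

lemma Good_ps: "Good m (t::'a::comm_ring_1) (ps m (a,b))"
proof -
  define c where "c = min a b"
  have "ps m (a,b) - mpConst (t ^ c) * ps m (a - c, b - c) =
     (\<Sum>i<m. mo i (a,b) - mpConst (t ^ c) * mo i (a - c, b - c))"
    by (simp add: ps_def sum_distrib_left sum_subtractf)
  moreover have "inI m t (\<Sum>i<m. mo i (a,b) - mpConst (t ^ c) * mo i (a - c, b - c))"
    by (rule inI_sum) (unfold c_def, rule inI_red, simp)
  ultimately have c1: "inI m t (ps m (a,b) - mpConst (t ^ c) * ps m (a - c, b - c))" by simp
  have c2: "Good m t (ps m (a - c, b - c))"
  proof (cases "a \<le> b")
    case True
    then have "ps m (a - c, b - c) = (\<Sum>i<m. mpVar (i,False) ^ (b - a) :: (nat \<times> bool, 'a) mpoly)"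
      by (simp add: ps_def mo_def c_def yv_def)
    then show ?thesis using Good_pows[of m t False "b - a"] by simp
  next
    case False
    then have "ps m (a - c, b - c) = (\<Sum>i<m. mpVar (i,True) ^ (a - b) :: (nat \<times> bool, 'a) mpoly)"
      by (simp add: ps_def mo_def c_def xv_def)
    then show ?thesis using Good_pows[of m t True "a - b"] by simp
  qed
  have c3: "Good m t (mpConst (t ^ c) * ps m (a - c, b - c))"
    by (rule Good_mult[OF Good_const c2])
  show ?thesis by (rule Good_of[OF c1 c3])
qed

definition Fs :: "nat \<Rightarrow> nat \<Rightarrow> (nat \<Rightarrow> nat) set" where
  "Fs m k = {f. (\<forall>j<k. f j < m) \<and> inj_on f {..<k} \<and> (\<forall>j. k \<le> j \<longrightarrow> f j = j)}"

definition MM :: "nat \<Rightarrow> nat \<Rightarrow> (nat \<Rightarrow> nat \<times> nat) \<Rightarrow> (nat \<times> bool, 'a::comm_ring_1) mpoly" where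
  "MM m k v = (\<Sum>f\<in>Fs m k. \<Prod>j<k. mo (f j) (v j))"

definition addp :: "nat \<times> nat \<Rightarrow> nat \<times> nat \<Rightarrow> nat \<times> nat" where
  "addp p q = (fst p + fst q, snd p + snd q)"

lemma mo_addp: "mo i p * mo i q = mo i (addp p q)"
  by (simp add: mo_def addp_def power_add mult_ac)

lemma finite_Fs: "finite (Fs m k)"
proof (rule finite_subset)
  show "Fs m k \<subseteq> (\<lambda>g j. if j < k then g j else j) ` ({..<k} \<rightarrow>\<^sub>E {..<m})"
  proof
    fix f assume f: "f \<in> Fs m k"
    have "f = (\<lambda>j. if j < k then restrict f {..<k} j else j)"
      using f by (auto simp: Fs_def fun_eq_iff)
    moreover have "restrict f {..<k} \<in> {..<k} \<rightarrow>\<^sub>E {..<m}" using f by (auto simp: Fs_def)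
    ultimately show "f \<in> (\<lambda>g j. if j < k then g j else j) ` ({..<k} \<rightarrow>\<^sub>E {..<m})" by blast
  qed
  show "finite ((\<lambda>g j. if j < k then g j else j) ` ({..<k} \<rightarrow>\<^sub>E {..<m}))"
    by (intro finite_imageI finite_PiE) auto
qed

lemma Fs_0: "Fs m 0 = {(\<lambda>j. j)}"
  by (auto simp: Fs_def)

lemma MM_0: "MM m 0 v = 1"
  by (simp add: MM_def Fs_0)

lemma Fs_image: "f \<in> Fs m k \<Longrightarrow> f ` {..<k} \<subseteq> {..<m}"
  by (auto simp: Fs_def)

lemma MM_rec: "(MM m k v * ps m w :: (nat \<times> bool, 'a::comm_ring_1) mpoly) = MM m (Suc k) (v(k:=w)) + (\<Sum>j<k. MM m k (v(j := addp (v j) w)))"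
proof -
  define pf :: "(nat \<Rightarrow> nat) \<Rightarrow> (nat \<times> bool, 'a) mpoly" where "pf f = (\<Prod>j<k. mo (f j) (v j))" for f
  have "MM m k v * ps m w = (\<Sum>f\<in>Fs m k. \<Sum>i<m. pf f * mo i w)"
    by (simp add: MM_def ps_def pf_def sum_distrib_left sum_distrib_right) (rule sum.swap)
  also have "\<dots> = (\<Sum>f\<in>Fs m k. (\<Sum>i\<in>{..<m} - f ` {..<k}. pf f * mo i w) + (\<Sum>i\<in>f ` {..<k}. pf f * mo i w))"
    by (rule sum.cong[OF refl], rule sum.subset_diff[OF Fs_image finite_lessThan])
  also have "\<dots> = (\<Sum>f\<in>Fs m k. \<Sum>i\<in>{..<m} - f ` {..<k}. pf f * mo i w) + (\<Sum>f\<in>Fs m k. \<Sum>i\<in>f ` {..<k}. pf f * mo i w)"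
    by (rule sum.distrib)
  also have "(\<Sum>f\<in>Fs m k. \<Sum>i\<in>{..<m} - f ` {..<k}. pf f * mo i w) = MM m (Suc k) (v(k:=w))"
  proof -
    have "(\<Sum>f\<in>Fs m k. \<Sum>i\<in>{..<m} - f ` {..<k}. pf f * mo i w) =
        (\<Sum>(f,i)\<in>Sigma (Fs m k) (\<lambda>f. {..<m} - f ` {..<k}). pf f * mo i w)"
      by (rule sum.Sigma) (auto simp: finite_Fs)
    also have "\<dots> = (\<Sum>g\<in>Fs m (Suc k). \<Prod>j<Suc k. mo (g j) ((v(k:=w)) j))"
    proof (rule sum.reindex_bij_witness[of _ "\<lambda>g. (g(k:=k), g k)" "\<lambda>(f,i). f(k:=i)"])
      fix x assume "x \<in> Sigma (Fs m k) (\<lambda>f. {..<m} - f ` {..<k})"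
      then obtain f i where x: "x = (f,i)" "f \<in> Fs m k" "i < m" "i \<notin> f ` {..<k}" by auto
      have fk: "f k = k" using x(2) by (simp add: Fs_def)
      show "((case x of (f, i) \<Rightarrow> f(k := i))(k := k), (case x of (f, i) \<Rightarrow> f(k := i)) k) = x"
        using x fk by (auto simp: fun_eq_iff)
      have "inj_on (f(k:=i)) (insert k {..<k})"
        using x by (auto simp: Fs_def inj_on_def)
      then show "(case x of (f, i) \<Rightarrow> f(k := i)) \<in> Fs m (Suc k)"
        using x by (auto simp: Fs_def lessThan_Suc less_Suc_eq)
      have "(\<Prod>j<Suc k. mo ((f(k:=i)) j) ((v(k:=w)) j)) = (\<Prod>j<k. mo ((f(k:=i)) j) ((v(k:=w)) j)) * mo i w"
        by simp
      also have "(\<Prod>j<k. mo ((f(k:=i)) j) ((v(k:=w)) j)) = pf f"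
        unfolding pf_def by (rule prod.cong) auto
      finally show "(\<Prod>j<Suc k. mo ((case x of (f, i) \<Rightarrow> f(k := i)) j) ((v(k := w)) j)) =
         (case x of (f, i) \<Rightarrow> pf f * mo i w)" using x by simp
    next
      fix g assume g: "g \<in> Fs m (Suc k)"
      show "(case (g(k := k), g k) of (f, i) \<Rightarrow> f(k := i)) = g" by simp
      have "g k \<notin> g ` {..<k}"
      proof
        assume "g k \<in> g ` {..<k}"
        then obtain x where "x < k" "g k = g x" by auto
        moreover have "inj_on g {..<Suc k}" using g by (simp add: Fs_def)
        ultimately have "k = x" by (auto dest: inj_onD)
        with \<open>x < k\<close> show False by simp
      qed
      moreover have "g k < m" using g by (simp add: Fs_def)
      moreover have "g(k:=k) \<in> Fs m k"
        using g by (auto simp: Fs_def inj_on_def)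
      moreover have "(g(k:=k)) ` {..<k} = g ` {..<k}" by auto
      ultimately show "(g(k := k), g k) \<in> Sigma (Fs m k) (\<lambda>f. {..<m} - f ` {..<k})" by auto
    qed
    finally show ?thesis by (simp add: MM_def)
  qed
  also have "(\<Sum>f\<in>Fs m k. \<Sum>i\<in>f ` {..<k}. pf f * mo i w) = (\<Sum>j<k. MM m k (v(j := addp (v j) w)))"
  proof -
    have "(\<Sum>f\<in>Fs m k. \<Sum>i\<in>f ` {..<k}. pf f * mo i w) = (\<Sum>f\<in>Fs m k. \<Sum>j<k. pf f * mo (f j) w)"
    proof (rule sum.cong[OF refl])
      fix f assume "f \<in> Fs m k"
      then have "inj_on f {..<k}" by (simp add: Fs_def)
      then show "(\<Sum>i\<in>f ` {..<k}. pf f * mo i w) = (\<Sum>j<k. pf f * mo (f j) w)"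
        by (simp add: sum.reindex)
    qed
    also have "\<dots> = (\<Sum>j<k. \<Sum>f\<in>Fs m k. pf f * mo (f j) w)"
      by (rule sum.swap)
    also have "\<dots> = (\<Sum>j<k. MM m k (v(j := addp (v j) w)))"
    proof (rule sum.cong[OF refl])
      fix j assume j: "j \<in> {..<k}"
      show "(\<Sum>f\<in>Fs m k. pf f * mo (f j) w) = MM m k (v(j := addp (v j) w))"
        unfolding MM_def
      proof (rule sum.cong[OF refl])
        fix f
        have "pf f * mo (f j) w = (\<Prod>j'\<in>{..<k} - {j}. mo (f j') (v j')) * (mo (f j) (v j) * mo (f j) w)"
          unfolding pf_def using j by (simp add: prod.remove[of "{..<k}" j] mult_ac)
        also have "\<dots> = (\<Prod>j'\<in>{..<k} - {j}. mo (f j') ((v(j := addp (v j) w)) j')) * mo (f j) ((v(j := addp (v j) w)) j)"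
          by (simp add: mo_addp)
        also have "\<dots> = (\<Prod>j'<k. mo (f j') ((v(j := addp (v j) w)) j'))"
          using j by (simp add: prod.remove[of "{..<k}" j] mult_ac)
        finally show "pf f * mo (f j) w = (\<Prod>j'<k. mo (f j') ((v(j := addp (v j) w)) j'))" .
      qed
    qed
    finally show ?thesis .
  qed
  finally show ?thesis .
qed

lemma Good_MM: "Good m (t::'a::comm_ring_1) (MM m k v)"
proof (induct k arbitrary: v)
  case 0
  then show ?case using Good_const[of m t 1] by (simp add: MM_0)
next
  case (Suc k)
  have "MM m (Suc k) v = (MM m k v * ps m (v k) - (\<Sum>j<k. MM m k (v(j := addp (v j) (v k)))) :: (nat \<times> bool, 'a) mpoly)"
    using MM_rec[of m k v "v k", symmetric] by (simp add: eq_diff_eq)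
  moreover have "Good m t (MM m k v * ps m (v k) - (\<Sum>j<k. MM m k (v(j := addp (v j) (v k)))))"
    using Good_ps[of m t "fst (v k)" "snd (v k)"]
    by (intro Good_diff Good_mult Good_sum Suc) simp_all
  ultimately show ?case by simp
qed

lemma Fs_perm: "Fs m m = {\<pi>. \<pi> permutes {..<m}}"
proof safe
  fix f assume f: "f \<in> Fs m m"
  have "f ` {..<m} = {..<m}"
    using f by (intro endo_inj_surj) (auto simp: Fs_def)
  then have "bij_betw f {..<m} {..<m}" using f by (simp add: Fs_def bij_betw_def)
  then show "f permutes {..<m}"
    using f by (intro bij_imp_permutes) (auto simp: Fs_def)
next
  fix \<pi> assume p: "\<pi> permutes {..<m}"
  show "\<pi> \<in> Fs m m" unfolding Fs_def
    using permutes_in_image[OF p] permutes_inj_on[OF p] permutes_not_in[OF p] by auto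
qed

definition vm :: "(nat \<times> bool \<Rightarrow>\<^sub>0 nat) \<Rightarrow> nat \<Rightarrow> nat \<times> nat" where
  "vm mon i = (Poly_Mapping.lookup mon (i,True), Poly_Mapping.lookup mon (i,False))"

lemma evm_perm:
  assumes "Poly_Mapping.keys mon \<subseteq> {..<m} \<times> UNIV"
  shows "evm (\<lambda>(i, b). mpVar (\<pi> i, b)) mon = (\<Prod>i<m. mo (\<pi> i) (vm mon i) :: (nat \<times> bool, 'a::comm_ring_1) mpoly)"
proof -
  have "evm (\<lambda>(i, b). mpVar (\<pi> i, b)) mon =
     (\<Prod>w\<in>{..<m} \<times> UNIV. (case w of (i, b) \<Rightarrow> mpVar (\<pi> i, b)) ^ Poly_Mapping.lookup mon w :: (nat \<times> bool, 'a) mpoly)"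
    by (rule evm_sub) (use assms in auto)
  also have "\<dots> = (\<Prod>i<m. \<Prod>b\<in>UNIV. mpVar (\<pi> i, b) ^ Poly_Mapping.lookup mon (i,b))"
    unfolding prod.cartesian_product by (rule prod.cong) auto
  also have "\<dots> = (\<Prod>i<m. mo (\<pi> i) (vm mon i))"
    by (rule prod.cong[OF refl]) (simp add: UNIV_bool mo_def vm_def xv_def yv_def)
  finally show ?thesis .
qed

lemma Good_sym:
  assumes "mpVars P \<subseteq> {..<m} \<times> UNIV"
  shows "Good m (t::'a::comm_ring_1) (\<Sum>\<pi>\<in>{\<pi>. \<pi> permutes {..<m}}. permute_mp \<pi> P)"
proof -
  have k: "Poly_Mapping.keys mon \<subseteq> {..<m} \<times> UNIV" if "mon \<in> Poly_Mapping.keys P" for mon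
    using assms that by (auto simp: mpVars_def)
  have "(\<Sum>\<pi>\<in>{\<pi>. \<pi> permutes {..<m}}. permute_mp \<pi> P) =
     (\<Sum>\<pi>\<in>Fs m m. \<Sum>mon\<in>Poly_Mapping.keys P. mpConst (Poly_Mapping.lookup P mon) * (\<Prod>i<m. mo (\<pi> i) (vm mon i)))"
    unfolding Fs_perm permute_mp_def mpSubst_def evm_def[symmetric]
  proof (intro sum.cong refl)
    fix \<pi> mon assume "mon \<in> Poly_Mapping.keys P"
    then show "mpConst (Poly_Mapping.lookup P mon) * evm (\<lambda>(i, b). mpVar (\<pi> i, b)) mon =
       mpConst (Poly_Mapping.lookup P mon) * (\<Prod>i<m. mo (\<pi> i) (vm mon i))"
      using evm_perm[where 'a='a, OF k, of mon \<pi>] by simp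
  qed
  also have "\<dots> = (\<Sum>mon\<in>Poly_Mapping.keys P. mpConst (Poly_Mapping.lookup P mon) * MM m m (vm mon))"
    by (subst sum.swap) (simp add: MM_def sum_distrib_left)
  finally show ?thesis
    by (simp only:) (intro Good_sum Good_mult Good_const Good_MM)
qed

theorem lemma2p1:
  fixes m :: nat and t :: "'a::idom"
  assumes Qalg: "\<forall>n::nat. n > 0 \<longrightarrow> (\<exists>u::'a. of_nat n * u = 1)"
    and P_vars: "mpVars P \<subseteq> {..<m} \<times> UNIV"
    and P_inv: "\<forall>\<pi>. \<pi> permutes {..<m} \<longrightarrow> permute_mp \<pi> P = P"
  shows "\<exists>(Q :: (nat \<times> bool, 'a) mpoly) (h :: nat \<Rightarrow> (nat \<times> bool, 'a) mpoly).
           mpVars Q \<subseteq> {1..m} \<times> UNIV \<and>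
           P - mpSubst (\<lambda>(k, b). esym m b k) Q
             = (\<Sum>i<m. h i * (xv i * yv i - mpConst t))"
proof -
  have "(\<Sum>\<pi>\<in>{\<pi>. \<pi> permutes {..<m}}. permute_mp \<pi> P) = (\<Sum>\<pi>\<in>{\<pi>. \<pi> permutes {..<m}}. P)"
    using P_inv by (intro sum.cong) auto
  also have "\<dots> = of_nat (card {\<pi>. \<pi> permutes {..<m}}) * P"
    by (rule sum_constant)
  also have "card {\<pi>. \<pi> permutes {..<m}} = fact m"
    by (rule card_permutations) simp_all
  finally have G: "Good m t (of_nat (fact m) * P)"
    using Good_sym[OF P_vars, of t] by simp
  obtain u :: 'a where u: "of_nat (fact m) * u = 1"
    using Qalg[rule_format, of "fact m"] by auto
  have u1: "mpConst u * of_nat (fact m) = (1 :: (nat \<times> bool, 'a) mpoly)"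
    by (metis mpConst_of_nat mpConst_mult mpConst_1 mult.commute u)
  have "mpConst u * (of_nat (fact m) * P) = P"
    by (simp add: u1 flip: mult.assoc)
  then have "Good m t P"
    using Good_mult[OF Good_const G, of u] by simp
  then obtain Q where "mpVars Q \<subseteq> {1..m} \<times> UNIV"
     "inI m t (P - mpSubst (\<lambda>(k, b). esym m b k) Q)"
    unfolding Good_def by blast
  then show ?thesis
    unfolding inI_def rr_def by blast
qed

end
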